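(* Let $u=u_1u_2\cdots u_t\in\{b,d\}^+$ be a nonempty word containing $i$ copies of $b$ and $j$ copies of $d$, and write $au(n)$ for $a(u_1(u_2(\cdots u_t(n)\cdots)))$ (similarly $ab(n)=a(b(n))$). Then for all $n\ge 1$, $$au(n)=F_{i+2j}\cdot ab(n)+F_{i+2j-1}\cdot a(n)+C(u)\cdot(2x(n)-1),$$ where $C(u)$ is defined recursively by $C(b)=0$, $C(d)=1$, and, for a nonempty word $v$ (with $i,j$ still the letter counts of $u$), $C(vb)=F_{i+2j-1}+C(v)$ if $u=vb$, and $C(vd)=F_{i+2j-1}-C(v)$ if $u=vd$.
   Context: $\varphi=(1+\sqrt5)/2$. Let $(F_n)_{n\ge 0}$ be the Fibonacci numbers: $F_0=0$, $F_1=1$, $F_n=F_{n-1}+F_{n-2}$ for $n\ge 2$. Define $(a(n))_{n\ge 0}$ (OEIS A105774) by $a(0)=0$, $a(1)=1$, and for $n\ge 2$, $a(n)=F_{j+1}-a(n-F_j)$, where $j\ge 2$ is the unique index with $F_j<n\le F_{j+1}$. Let $b(n)=\lfloor \varphi n\rfloor$, $d(n)=\lfloor\varphi^2 n\rfloor$, and $x(n)=a(b(n))-b(a(n))$. *)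

theory Defs
  imports Complex_Main "HOL-Number_Theory.Fib"
begin

definition phi :: real where "phi = (1 + sqrt 5) / 2"

lemma fib_Suc_ge: "k \<le> fib (Suc k)"
proof (induction k rule: nat_less_induct)
  case (1 k)
  show ?case
  proof (cases "k < 2")
    case True then show ?thesis by (cases k) (auto simp: numeral_2_eq_2 less_Suc_eq)
  next
    case False
    then obtain m where k: "k = m + 2" using le_add_diff_inverse2 by (metis not_less)
    have "m + 1 \<le> fib (Suc (m+1))" using 1 k by auto
    moreover have "1 \<le> fib (Suc m)" using fib_neq_0_nat[of "Suc m"] by simp
    moreover have "fib (Suc k) = fib (Suc (m+1)) + fib (Suc m)"
      using fib_plus_2[of "Suc m"] k by simp
    ultimately show ?thesis using k by simp
  qed
qed

definition fibidx :: "nat \<Rightarrow> nat" where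
  "fibidx n = (THE j. 2 \<le> j \<and> fib j < n \<and> n \<le> fib (Suc j))"

lemma fibidx_ex1:
  assumes "2 \<le> n"
  shows "\<exists>!j. 2 \<le> j \<and> fib j < n \<and> n \<le> fib (Suc j)"
proof -
  let ?P = "\<lambda>k. 2 \<le> k \<and> n \<le> fib (Suc k)"
  have ex: "?P (n + 2)" using fib_Suc_ge[of "n+2"] by simp
  define j where "j = (LEAST k. ?P k)"
  have Pj: "?P j" unfolding j_def by (rule LeastI[of ?P, OF ex])
  have lt: "fib j < n"
  proof (cases "j = 2")
    case True then show ?thesis using assms by simp
  next
    case False
    then have "2 \<le> j - 1" "Suc (j - 1) = j" using Pj by auto
    moreover have "\<not> ?P (j - 1)"
      using not_less_Least[of "j - 1" ?P] Pj unfolding j_def[symmetric] by auto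
    ultimately show ?thesis by auto
  qed
  show ?thesis
  proof (rule ex1I[of _ j])
    show "2 \<le> j \<and> fib j < n \<and> n \<le> fib (Suc j)" using Pj lt by auto
  next
    fix j' assume h: "2 \<le> j' \<and> fib j' < n \<and> n \<le> fib (Suc j')"
    show "j' = j"
    proof (rule ccontr)
      assume "j' \<noteq> j"
      then have "j' < j \<or> j < j'" by auto
      then show False
      proof
        assume "j' < j" then have "fib (Suc j') \<le> fib j" by (intro fib_mono) simp
        then show False using h lt by simp
      next
        assume "j < j'" then have "fib (Suc j) \<le> fib j'" by (intro fib_mono) simp
        then show False using h Pj by simp
      qed
    qed
  qed
qed

lemma fibidx_prop:
  assumes "2 \<le> n"
  shows "2 \<le> fibidx n \<and> fib (fibidx n) < n \<and> n \<le> fib (Suc (fibidx n))"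
  unfolding fibidx_def using theI'[OF fibidx_ex1[OF assms]] .

text \<open>OEIS A105774, indexed by naturals, values as integers.\<close>
function aN :: "nat \<Rightarrow> int" where
  "aN n = (if n = 0 then 0 else if n = 1 then 1
           else int (fib (Suc (fibidx n))) - aN (n - fib (fibidx n)))"
  by auto
termination
proof (relation "measure id")
  fix n :: nat assume "\<not> n = 0" "\<not> n = 1"
  then have "2 \<le> n" by simp
  from fibidx_prop[OF this] have "0 < fib (fibidx n)" using fib_neq_0_nat by auto
  then show "(n - fib (fibidx n), n) \<in> measure id" using \<open>2 \<le> n\<close> by simp
qed simp

declare aN.simps [simp del]

text \<open>All maps are taken on integers (arguments are always nonnegative in use).\<close>
definition a :: "int \<Rightarrow> int" where "a n = aN (nat n)"
definition b :: "int \<Rightarrow> int" where "b n = \<lfloor>phi * of_int n\<rfloor>"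
definition d :: "int \<Rightarrow> int" where "d n = \<lfloor>phi^2 * of_int n\<rfloor>"
definition x :: "int \<Rightarrow> int" where "x n = a (b n) - b (a n)"

datatype letter = LB | LD

fun letter_fun :: "letter \<Rightarrow> int \<Rightarrow> int" where
  "letter_fun LB = b" | "letter_fun LD = d"

fun word_fun :: "letter list \<Rightarrow> int \<Rightarrow> int" where
  "word_fun [] n = n"
| "word_fun (c # w) n = letter_fun c (word_fun w n)"

definition nb :: "letter list \<Rightarrow> nat" where "nb u = count_list u LB"
definition nd :: "letter list \<Rightarrow> nat" where "nd u = count_list u LD"

text \<open>C on the reversed word: Crev (c # w) = C(rev w @ [c]).\<close>
fun Crev :: "letter list \<Rightarrow> int" where
  "Crev [] = 0"
| "Crev [LB] = 0"
| "Crev [LD] = 1"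
| "Crev (LB # w) = int (fib (nb (LB # w) + 2 * nd (LB # w) - 1)) + Crev w"
| "Crev (LD # w) = int (fib (nb (LD # w) + 2 * nd (LD # w) - 1)) - Crev w"

definition C :: "letter list \<Rightarrow> int" where "C u = Crev (rev u)"

end

theory Submission imports Defs begin


definition zok :: "nat list \<Rightarrow> bool" where
  "zok L = (sorted_wrt (\<lambda>i j. j + 2 \<le> i) L \<and> (\<forall>i\<in>set L. 2 \<le> i))"

definition zval :: "nat list \<Rightarrow> nat" where "zval L = sum_list (map fib L)"

fun alt :: "nat \<Rightarrow> nat list \<Rightarrow> int" where
  "alt k [] = 0"
| "alt k (j # L) = int (fib (j + k)) - alt k L"

lemma zok_Cons: "zok (j # L) \<longleftrightarrow> zok L \<and> 2 \<le> j \<and> (\<forall>i\<in>set L. i + 2 \<le> j)"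
  unfolding zok_def by auto

lemma zval_Cons[simp]: "zval (j # L) = fib j + zval L" by (simp add: zval_def)
lemma zval_Nil[simp]: "zval [] = 0" by (simp add: zval_def)

lemma zval_lt: "zok (j # L) \<Longrightarrow> zval (j # L) < fib (Suc j)"
proof (induction L arbitrary: j)
  case Nil
  then have "2 \<le> j" by (simp add: zok_Cons)
  then obtain m where m: "j = Suc (Suc m)" by (metis add_2_eq_Suc le_iff_add add.commute)
  have "0 < fib (Suc m)" by (simp add: fib_neq_0_nat)
  then show ?case using m by simp
next
  case (Cons j' L)
  from Cons.prems have z: "zok (j' # L)" and jj: "j' + 2 \<le> j" and j2: "2 \<le> j"
    by (auto simp: zok_Cons)
  have "zval (j' # L) < fib (Suc j')" using Cons.IH z by blast
  moreover have "fib (Suc j') \<le> fib (j - 1)" using jj by (intro fib_mono) simp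
  moreover have "fib (Suc j) = fib j + fib (j - 1)"
    using j2 fib_plus_2[of "j - 1"] by (simp add: numeral_2_eq_2 Suc_diff_Suc)
  ultimately show ?case by simp
qed

lemma fibidx_eq:
  assumes "2 \<le> j" "fib j < n" "n \<le> fib (Suc j)"
  shows "fibidx n = j"
proof -
  have n2: "2 \<le> n"
  proof -
    have "1 \<le> fib j" using assms(1) fib_neq_0_nat[of j] by simp
    then show ?thesis using assms(2) by simp
  qed
  show ?thesis unfolding fibidx_def
    by (rule the1_equality[OF fibidx_ex1[OF n2]]) (use assms in auto)
qed

lemma aL: "zok L \<Longrightarrow> aN (zval L + 1) = alt 1 L + (-1) ^ length L"
proof (induction L)
  case Nil
  then show ?case by (simp add: aN.simps)
next
  case (Cons j L)
  have z: "zok L" and j2: "2 \<le> j" using Cons.prems by (auto simp: zok_Cons)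
  have f1: "1 \<le> fib j" using j2 fib_neq_0_nat[of j] by simp
  have lt: "zval (j # L) < fib (Suc j)" using zval_lt Cons.prems by blast
  have fi: "fibidx (zval (j # L) + 1) = j"
    by (rule fibidx_eq) (use j2 lt in auto)
  have "aN (zval (j # L) + 1) = int (fib (Suc j)) - aN (zval (j # L) + 1 - fib j)"
    using f1 fi by (subst aN.simps) simp
  also have "zval (j # L) + 1 - fib j = zval L + 1" by simp
  finally show ?case using Cons.IH[OF z] by simp
qed

lemma z_exists: "\<exists>L. zok L \<and> zval L = m"
proof (induction m rule: less_induct)
  case (less m)
  show ?case
  proof (cases "m = 0")
    case True then show ?thesis by (intro exI[of _ "[]"]) (simp add: zok_def)
  next
    case False
    define j where "j = fibidx (m + 1)"
    have P: "2 \<le> j \<and> fib j < m + 1 \<and> m + 1 \<le> fib (Suc j)"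
      unfolding j_def by (rule fibidx_prop) (use False in simp)
    have f1: "1 \<le> fib j" using P fib_neq_0_nat[of j] by simp
    have fs: "fib (Suc j) = fib j + fib (j - 1)"
      using P fib_plus_2[of "j - 1"] by (simp add: numeral_2_eq_2 Suc_diff_Suc)
    obtain L where L: "zok L" "zval L = m - fib j" using less.IH[of "m - fib j"] f1 False by auto
    have "\<forall>i\<in>set L. i + 2 \<le> j"
    proof
      fix i assume "i \<in> set L"
      then have "fib i \<le> zval L" unfolding zval_def using member_le_sum_list[of "fib i" "map fib L"] by simp
      then have "fib i < fib (j - 1)" using L P fs by linarith
      then have "\<not> j - 1 \<le> i" using fib_mono[of "j - 1" i] by linarith
      then show "i + 2 \<le> j" by simp
    qed
    then have "zok (j # L)" using L P by (simp add: zok_Cons)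
    moreover have "zval (j # L) = m" using L P by simp
    ultimately show ?thesis by blast
  qed
qed

lemma zok_Suc: "zok L \<Longrightarrow> zok (map Suc L)"
  unfolding zok_def by (auto simp: sorted_wrt_map elim: sorted_wrt_mono_rel[rotated])

lemma zok_d: "zok L \<Longrightarrow> zok (map Suc (map Suc L) @ [2])"
  unfolding zok_def by (auto simp: sorted_wrt_append sorted_wrt_map elim: sorted_wrt_mono_rel[rotated])

lemma alt_Suc: "alt k (map Suc L) = alt (Suc k) L"
  by (induction L) auto

lemma alt_rec: "alt (k + 2) L = alt (k + 1) L + alt k L"
  by (induction L) (auto simp: algebra_simps numeral_2_eq_2)

lemma alt_app: "alt k (L @ [j]) = alt k L + (-1) ^ length L * int (fib (j + k))"
  by (induction L) (auto simp: algebra_simps)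

lemma zval_SS: "zval (map Suc (map Suc L)) = zval (map Suc L) + zval L"
  by (induction L) auto



definition psi :: real where "psi = 1 - phi"
definition qq :: real where "qq = phi - 1"

lemma s5: "sqrt 5 * sqrt 5 = (5::real)" by simp
lemma s5b: "2 < sqrt (5::real)" "sqrt (5::real) < 3"
  by (simp add: real_less_rsqrt) (rule real_less_lsqrt, auto)

lemma phi_sq: "phi * phi = phi + 1"
  unfolding phi_def by (simp add: field_simps s5 algebra_simps)

lemma psi_sq: "psi * psi = psi + 1"
  unfolding psi_def using phi_sq by (simp add: algebra_simps)

lemma qq_pos: "0 < qq" and qq_half: "1/2 < qq" and qq_lt1: "qq < 1"
  unfolding qq_def phi_def using s5b by auto

lemma qq_sq: "qq * qq = 1 - qq"
  unfolding qq_def using phi_sq by (simp add: algebra_simps)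

lemma qq_rec: "qq ^ Suc k + qq ^ Suc (Suc k) = qq ^ k"
proof -
  have "qq ^ Suc k + qq ^ Suc (Suc k) = qq ^ k * (qq + qq * qq)" by (simp add: algebra_simps)
  also have "qq + qq * qq = 1" using qq_sq by simp
  finally show ?thesis by simp
qed

lemma abs_psi_pow: "\<bar>psi ^ k\<bar> = qq ^ k"
proof -
  have "psi = - qq" unfolding psi_def qq_def by simp
  then have "\<bar>psi\<bar> = qq" using qq_pos by simp
  then show ?thesis by (simp add: power_abs)
qed

lemma fib_phi: "phi * real (fib k) = real (fib (Suc k)) - psi ^ k"
proof (induction k rule: fib.induct)
  case 1 then show ?case by simp
next
  case 2 then show ?case by (simp add: psi_def)
next
  case (3 n)
  have "phi * real (fib (Suc (Suc n))) = phi * real (fib (Suc n)) + phi * real (fib n)"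
    by (simp add: algebra_simps)
  also have "\<dots> = real (fib (Suc (Suc n))) + real (fib (Suc n)) - psi ^ n * (psi + 1)"
    using 3 by (simp add: algebra_simps)
  also have "psi + 1 = psi * psi" using psi_sq by simp
  finally show ?case by (simp add: algebra_simps)
qed

definition Sq :: "nat list \<Rightarrow> real" where "Sq L = sum_list (map (\<lambda>i. qq ^ i) L)"
definition Ep :: "nat list \<Rightarrow> real" where "Ep L = sum_list (map (\<lambda>i. psi ^ i) L)"

fun Ealt :: "nat list \<Rightarrow> real" where
  "Ealt [] = 0"
| "Ealt (j # L) = psi ^ (j + 1) - Ealt L"

lemma Sq_bound0:
  assumes "sorted_wrt (\<lambda>i j. j + 2 \<le> i) (j # L)" "\<forall>i\<in>set (j # L). Suc k \<le> i"
  shows "Sq (j # L) \<le> qq ^ k - qq ^ (j + 1)"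
  using assms
proof (induction L arbitrary: j)
  case Nil
  have "qq ^ j + qq ^ Suc j = qq ^ (j - 1)" using Nil qq_rec[of "j - 1"] by simp
  moreover have "qq ^ (j - 1) \<le> qq ^ k" using Nil qq_pos qq_lt1
    by (intro power_decreasing) auto
  ultimately show ?case by (simp add: Sq_def)
next
  case (Cons j' L)
  have IH: "Sq (j' # L) \<le> qq ^ k - qq ^ (j' + 1)" using Cons by auto
  have jj: "j' + 2 \<le> j" using Cons.prems by auto
  have "qq ^ j + qq ^ Suc j = qq ^ (j - 1)" using jj qq_rec[of "j - 1"] by simp
  moreover have "qq ^ (j - 1) \<le> qq ^ (j' + 1)" using jj qq_pos qq_lt1
    by (intro power_decreasing) auto
  moreover have "Sq (j # j' # L) = qq ^ j + Sq (j' # L)" by (simp add: Sq_def)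
  ultimately show ?case using IH by simp
qed

lemma Sq_bound:
  assumes "sorted_wrt (\<lambda>i j. j + 2 \<le> i) L" "\<forall>i\<in>set L. Suc k \<le> i"
  shows "Sq L < qq ^ k"
proof (cases L)
  case Nil then show ?thesis using qq_pos by (simp add: Sq_def)
next
  case (Cons j L')
  have "Sq L \<le> qq ^ k - qq ^ (j + 1)" using Sq_bound0 assms Cons by blast
  moreover have "0 < qq ^ (j + 1)" using qq_pos by simp
  ultimately show ?thesis by simp
qed

lemma Ep_abs: "\<bar>Ep L\<bar> \<le> Sq L"
proof (induction L)
  case Nil then show ?case by (simp add: Ep_def Sq_def)
next
  case (Cons j L)
  have "\<bar>Ep (j # L)\<bar> \<le> \<bar>psi ^ j\<bar> + \<bar>Ep L\<bar>" by (simp add: Ep_def abs_triangle_ineq)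
  then show ?case using Cons abs_psi_pow[of j] by (simp add: Sq_def)
qed

lemma Ealt_abs: "\<bar>Ealt L\<bar> \<le> Sq (map Suc L)"
proof (induction L)
  case Nil then show ?case by (simp add: Sq_def)
next
  case (Cons j L)
  have "\<bar>Ealt (j # L)\<bar> \<le> \<bar>psi ^ (j+1)\<bar> + \<bar>Ealt L\<bar>" by (simp add: abs_triangle_ineq4)
  then show ?case using Cons abs_psi_pow[of "j+1"] by (simp add: Sq_def)
qed

lemma phi_zval: "phi * real (zval L) = real (zval (map Suc L)) - Ep L"
  by (induction L) (auto simp: Ep_def algebra_simps fib_phi)

lemma phi_alt: "phi * real_of_int (alt 1 L) = real_of_int (alt 2 L) - Ealt L"
proof (induction L)
  case Nil then show ?case by simp
next
  case (Cons j L)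
  have "phi * real (fib (j + 1)) = real (fib (j+2)) - psi ^ (j+1)"
    using fib_phi[of "j+1"] by simp
  then show ?case using Cons by (simp add: algebra_simps)
qed



lemma zval_app[simp]: "zval (L @ [j]) = zval L + fib j" by (simp add: zval_def)

lemma bL:
  assumes "zok L"
  shows "b (int (zval L + 1)) = int (zval (map Suc L)) + 1"
proof -
  have sw: "sorted_wrt (\<lambda>i j. j + 2 \<le> i) L" and ge: "\<forall>i\<in>set L. 2 \<le> i"
    using assms by (auto simp: zok_def)
  have E: "qq - 1 < Ep L \<and> Ep L \<le> qq"
  proof (cases "2 \<in> set L")
    case False
    have "\<forall>i\<in>set L. Suc 2 \<le> i"
    proof
      fix i assume "i \<in> set L"
      with False ge have "2 \<le> i" "i \<noteq> 2" by auto
      then show "Suc 2 \<le> i" by simp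
    qed
    then have "Sq L < qq ^ 2" using Sq_bound sw by blast
    then have "\<bar>Ep L\<bar> < qq * qq" using Ep_abs[of L] by (simp add: power2_eq_square)
    then show ?thesis using qq_sq qq_pos qq_half by (auto simp: abs_less_iff)
  next
    case True
    then obtain xs ys where L: "L = xs @ 2 # ys" by (meson split_list)
    have "ys = []"
    proof (rule ccontr)
      assume "ys \<noteq> []"
      then obtain y where "y \<in> set ys" by (cases ys) auto
      then show False using sw ge L by (fastforce simp: sorted_wrt_append)
    qed
    with L have L': "L = xs @ [2]" by simp
    have "\<forall>i\<in>set xs. Suc 3 \<le> i" using sw L' by (auto simp: sorted_wrt_append)
    moreover have "sorted_wrt (\<lambda>i j. j + 2 \<le> i) xs" using sw L' by (simp add: sorted_wrt_append)
    ultimately have "Sq xs < qq ^ 3" using Sq_bound by blast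
    then have ab: "\<bar>Ep xs\<bar> < qq ^ 3" using Ep_abs[of xs] by simp
    have "Ep L = Ep xs + psi ^ 2" using L' by (simp add: Ep_def)
    moreover have "psi ^ 2 = qq ^ 2" using abs_psi_pow[of 2] by simp
    moreover have "qq ^ 3 \<le> qq ^ 2" using qq_pos qq_lt1 by (intro power_decreasing) auto
    moreover have "qq ^ 2 + qq ^ 3 = qq" using qq_rec[of 1] by (simp add: numeral_3_eq_3 numeral_2_eq_2)
    moreover have "0 < qq ^ 3" using qq_pos by simp
    ultimately have h: "Ep L = Ep xs + qq^2" "qq ^ 3 \<le> qq ^ 2" "qq ^ 2 + qq ^ 3 = qq" "0 < qq ^ 3" by auto
    have "Ep xs < qq^3" "-Ep xs < qq^3" using ab by (auto simp: abs_less_iff)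
    then show ?thesis using h qq_lt1 by linarith
  qed
  have X: "phi * real_of_int (int (zval L + 1)) = real (zval (map Suc L)) + (phi - Ep L)"
    using phi_zval[of L] by (simp add: algebra_simps)
  have "phi = qq + 1" by (simp add: qq_def)
  then have "1 \<le> phi - Ep L \<and> phi - Ep L < 2" using E by auto
  then show ?thesis unfolding b_def X
    by (simp add: floor_eq_iff)
qed

lemma bL': "zok L \<Longrightarrow> b (int (zval L + 1)) = int (zval (map Suc L) + 1)"
  using bL by simp

lemma a_int: "a (int m) = aN m" by (simp add: a_def)

lemma xL:
  assumes "zok L"
  shows "2 * x (int (zval L + 1)) - 1 = - ((-1) ^ length L)"
proof -
  let ?s = "(-1::int) ^ length L"
  have an: "a (int (zval L + 1)) = alt 1 L + ?s" using aL[OF assms] by (simp only: a_int)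
  have abn: "a (b (int (zval L + 1))) = alt 2 L + ?s"
    using bL'[OF assms] aL[OF zok_Suc[OF assms]] alt_Suc[of 1 L]
    by (simp only: a_int) (simp add: numeral_2_eq_2)
  have "sorted_wrt (\<lambda>i j. j + 2 \<le> i) (map Suc L)" "\<forall>i\<in>set (map Suc L). Suc 2 \<le> i"
    using zok_Suc[OF assms] assms by (auto simp: zok_def)
  then have "Sq (map Suc L) < qq ^ 2" using Sq_bound by blast
  then have EB: "\<bar>Ealt L\<bar> < qq * qq" using Ealt_abs[of L] by (simp add: power2_eq_square)
  have ph: "phi = qq + 1" by (simp add: qq_def)
  have X: "phi * real_of_int (alt 1 L + ?s) = real_of_int (alt 2 L) + (?s * phi - Ealt L)"
    using phi_alt[of L] by (simp add: algebra_simps)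
  have BA: "b (a (int (zval L + 1))) = \<lfloor>real_of_int (alt 2 L) + (?s * phi - Ealt L)\<rfloor>"
    by (simp only: b_def an X)
  show ?thesis
  proof (cases "even (length L)")
    case True
    then have s: "?s = 1" by simp
    have "1 \<le> phi - Ealt L \<and> phi - Ealt L < 2" using EB ph qq_sq qq_half by (auto simp: abs_less_iff)
    then have "b (a (int (zval L + 1))) = alt 2 L + 1"
      unfolding BA s by (simp add: floor_eq_iff)
    then show ?thesis unfolding x_def abn s by simp
  next
    case False
    then have s: "?s = -1" by simp
    have "-2 \<le> - phi - Ealt L \<and> - phi - Ealt L < -1" using EB ph qq_sq qq_half by (auto simp: abs_less_iff)
    then have "b (a (int (zval L + 1))) = alt 2 L - 2"
      unfolding BA s by (simp add: floor_eq_iff)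
    then show ?thesis unfolding x_def abn s by simp
  qed
qed

lemma d_b: "d n = b n + n"
proof -
  have "phi ^ 2 * of_int n = phi * of_int n + of_int n" using phi_sq by (simp add: power2_eq_square algebra_simps)
  then show ?thesis unfolding d_def b_def by simp
qed

lemma dL:
  assumes "zok L"
  shows "d (int (zval L + 1)) = int (zval (map Suc (map Suc L) @ [2]) + 1)"
  using d_b bL[OF assms] zval_SS[of L] by (simp add: numeral_2_eq_2)



lemma alt_SS: "alt k (map (Suc \<circ> Suc) L) = alt (Suc (Suc k)) L"
  by (induction L) auto

lemma core:
  fixes n :: int
  assumes "1 \<le> n"
  shows "a (d n) = a (b n) + a n + (2 * x n - 1)"
    and "a (b (d n)) = 2 * a (b n) + a n + (2 * x n - 1)"
    and "a (b (b n)) = a (b n) + a n + (2 * x n - 1)"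
    and "2 * x (b n) - 1 = 2 * x n - 1"
    and "2 * x (d n) - 1 = - (2 * x n - 1)"
    and "1 \<le> b n" and "1 \<le> d n"
proof -
  obtain L where L: "zok L" "zval L = nat n - 1" using z_exists by blast
  have n: "n = int (zval L + 1)" using L assms by simp
  let ?s = "(-1::int) ^ length L"
  define L1 where "L1 = map Suc L"
  define L2 where "L2 = map Suc (map Suc L) @ [2]"
  have z1: "zok L1" and z2: "zok L2" and z11: "zok (map Suc L1)" and z21: "zok (map Suc L2)"
    using L zok_Suc zok_d unfolding L1_def L2_def by blast+
  have bn: "b n = int (zval L1 + 1)" unfolding n L1_def using bL' L by blast
  have bbn: "b (b n) = int (zval (map Suc L1) + 1)" unfolding bn using bL' z1 by blast
  have dn: "d n = int (zval L2 + 1)" unfolding n L2_def by (rule dL[OF L(1)])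
  have bdn: "b (d n) = int (zval (map Suc L2) + 1)" unfolding dn using bL' z2 by blast
  have an: "a n = alt 1 L + ?s" unfolding n a_int using aL L by blast
  have abn: "a (b n) = alt 2 L + ?s" unfolding bn a_int L1_def using aL[OF zok_Suc[OF L(1)]]
    by (simp add: alt_Suc numeral_2_eq_2)
  have A1: "alt 1 (map Suc (map Suc L)) = alt 3 L"
    using alt_Suc[of 1 "map Suc L"] alt_Suc[of 2 L] by (simp add: numeral_3_eq_3 numeral_2_eq_2)
  have A2: "alt 1 (map Suc (map Suc (map Suc L))) = alt 4 L"
    using alt_Suc[of 1 "map Suc (map Suc L)"] alt_Suc[of 2 "map Suc L"] alt_Suc[of 3 L]
    by (simp add: eval_nat_numeral)
  have abbn: "a (b (b n)) = alt 3 L + ?s" unfolding bbn a_int L1_def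
    using aL[OF zok_Suc[OF zok_Suc[OF L(1)]]] A1 by simp
  have "alt 1 L2 = alt 3 L + ?s * 2" unfolding L2_def alt_app A1
    by (simp add: eval_nat_numeral)
  moreover have "aN (zval L2 + 1) = alt 1 L2 + (-1) ^ length L2" using aL[OF z2] .
  moreover have "length L2 = Suc (length L)" unfolding L2_def by simp
  ultimately have adn: "a (d n) = alt 3 L + ?s" unfolding dn a_int by simp
  have ML2: "map Suc L2 = map Suc (map Suc (map Suc L)) @ [3]" unfolding L2_def by simp
  have "alt 1 (map Suc L2) = alt 4 L + ?s * 3" unfolding ML2 alt_app A2
    by (simp add: eval_nat_numeral)
  moreover have "aN (zval (map Suc L2) + 1) = alt 1 (map Suc L2) + (-1) ^ length (map Suc L2)"
    using aL[OF z21[unfolded L1_def]] by (simp add: L2_def)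
  moreover have "length (map Suc L2) = Suc (length L)" unfolding L2_def by simp
  ultimately have abdn: "a (b (d n)) = alt 4 L + 2 * ?s" unfolding bdn a_int by simp
  have xn: "2 * x n - 1 = - ?s" unfolding n using xL L by blast
  have xbn: "2 * x (b n) - 1 = - ?s" unfolding bn using xL[OF z1] by (simp add: L1_def)
  have xdn: "2 * x (d n) - 1 = ?s" unfolding dn using xL[OF z2] by (simp add: L2_def)
  have r3: "alt 3 L = alt 2 L + alt 1 L" using alt_rec[of 1 L] by (simp add: eval_nat_numeral)
  have r4: "alt 4 L = alt 3 L + alt 2 L" using alt_rec[of 2 L] by (simp add: eval_nat_numeral)
  show "a (d n) = a (b n) + a n + (2 * x n - 1)" using adn abn an xn r3 by simp
  show "a (b (d n)) = 2 * a (b n) + a n + (2 * x n - 1)" using abdn abn an xn r3 r4 by simp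
  show "a (b (b n)) = a (b n) + a n + (2 * x n - 1)" using abbn abn an xn r3 by simp
  show "2 * x (b n) - 1 = 2 * x n - 1" using xbn xn by simp
  show "2 * x (d n) - 1 = - (2 * x n - 1)" using xdn xn by simp
  show "1 \<le> b n" using bn by simp
  show "1 \<le> d n" using dn by simp
qed

lemma word_fun_app: "word_fun (v @ [c]) n = word_fun v (letter_fun c n)"
  by (induction v) auto

lemma count_rev: "count_list (rev v) c = count_list v c"
  by (induction v) auto

lemma nbd_pos: "v \<noteq> [] \<Longrightarrow> 1 \<le> nb v + 2 * nd v"
proof (cases v)
  case (Cons y ys) assume "v \<noteq> []"
  then show ?thesis using Cons by (cases y) (auto simp: nb_def nd_def)
qed simp

lemma main:
  assumes "u \<noteq> []" "1 \<le> n"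
  shows "a (word_fun u n) =
           int (fib (nb u + 2 * nd u)) * a (b n)
         + int (fib (nb u + 2 * nd u - 1)) * a n
         + C u * (2 * x n - 1)"
  using assms
proof (induction u arbitrary: n rule: rev_induct)
  case Nil then show ?case by simp
next
  case (snoc c v)
  note cr = core[OF snoc.prems(2)]
  show ?case
  proof (cases "v = []")
    case True
    show ?thesis
    proof (cases c)
      case LB
      have "C (v @ [c]) = 0" "nb (v @ [c]) = 1" "nd (v @ [c]) = 0"
        using True LB by (simp_all add: nb_def nd_def C_def)
      then show ?thesis using True LB by simp
    next
      case LD
      have "C (v @ [c]) = 1" "nb (v @ [c]) = 0" "nd (v @ [c]) = 1"
        using True LD by (simp_all add: nb_def nd_def C_def)
      moreover have "word_fun (v @ [c]) n = d n" using True LD by simp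
      ultimately show ?thesis using cr(1) by (simp add: numeral_2_eq_2)
    qed
  next
    case False
    obtain y ys where rv: "rev v = y # ys" using False by (cases "rev v") auto
    define k where "k = nb v + 2 * nd v"
    have k1: "1 \<le> k" using nbd_pos[OF False] k_def by simp
    have f1: "int (fib (k + 1)) = int (fib k) + int (fib (k - 1))"
      using k1 fib_plus_2[of "k - 1"] by (simp add: Suc_diff_Suc numeral_2_eq_2)
    have f2: "int (fib (k + 2)) = 2 * int (fib k) + int (fib (k - 1))"
      using f1 fib_plus_2[of k] by simp
    have nbr: "nb (rev v) = nb v" "nd (rev v) = nd v" by (simp_all add: nb_def nd_def count_rev)
    show ?thesis
    proof (cases c)
      case LB
      have bn: "1 \<le> b n" using cr(6) .
      have IH: "a (word_fun v (b n)) = int (fib k) * a (b (b n)) + int (fib (k - 1)) * a (b n)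
          + C v * (2 * x (b n) - 1)" using snoc.IH[OF False bn] unfolding k_def .
      have Cu: "C (v @ [c]) = int (fib k) + C v"
        using LB rv nbr unfolding C_def by (simp add: k_def nb_def nd_def)
      have cnt: "nb (v @ [c]) + 2 * nd (v @ [c]) = k + 1" using LB k_def by (simp add: nb_def nd_def)
      have w: "word_fun (v @ [c]) n = word_fun v (b n)" using LB by (simp add: word_fun_app)
      show ?thesis unfolding w cnt Cu IH cr(3) cr(4) f1 by (simp add: algebra_simps)
    next
      case LD
      have dn: "1 \<le> d n" using cr(7) .
      have IH: "a (word_fun v (d n)) = int (fib k) * a (b (d n)) + int (fib (k - 1)) * a (d n)
          + C v * (2 * x (d n) - 1)" using snoc.IH[OF False dn] unfolding k_def .
      have Cu: "C (v @ [c]) = int (fib (k + 1)) - C v"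
        using LD rv nbr unfolding C_def by (simp add: k_def nb_def nd_def)
      have cnt: "nb (v @ [c]) + 2 * nd (v @ [c]) = k + 2" using LD k_def by (simp add: nb_def nd_def)
      have w: "word_fun (v @ [c]) n = word_fun v (d n)" using LD by (simp add: word_fun_app)
      have kk: "k + 2 - 1 = k + 1" by simp
      show ?thesis unfolding w cnt kk Cu IH cr(1) cr(2) cr(5) f1 f2 by (simp add: algebra_simps)
    qed
  qed
qed

theorem theorem23:
  fixes u :: "letter list" and i j n :: nat
  assumes "u \<noteq> []" and "i = nb u" and "j = nd u" and "1 \<le> n"
  shows "a (word_fun u (int n)) =
           int (fib (i + 2 * j)) * a (b (int n))
         + int (fib (i + 2 * j - 1)) * a (int n)
         + C u * (2 * x (int n) - 1)"
  using main[of u "int n"] assms by simp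


end
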